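(* Let $\Sigma$ be a dilation surface which contains (an embedded copy of) a dilation cylinder of angle at least $\pi$. Then $\Sigma$ does not admit a geodesic triangulation. *)

theory Defs
  imports "HOL-Analysis.Analysis"
begin

definition dilation_map :: "(complex \<Rightarrow> complex) \<Rightarrow> bool" where
  "dilation_map g \<longleftrightarrow> (\<exists>(a::real) b. a > 0 \<and> (\<forall>z. g z = complex_of_real a * z + b))"

definition develops ::
  "('a set \<times> ('a \<Rightarrow> complex)) set \<Rightarrow> 'b topology \<Rightarrow> 'b set \<Rightarrow> ('b \<Rightarrow> 'a) \<Rightarrow> ('b \<Rightarrow> complex) \<Rightarrow> bool"
  where
  "develops A Y D tau f \<longleftrightarrow>
     (\<forall>p\<in>D. \<forall>V phi. (V, phi) \<in> A \<and> tau p \<in> V \<longrightarrow>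
        (\<exists>N g. openin Y N \<and> p \<in> N \<and> dilation_map g \<and>
               (\<forall>q\<in>N \<inter> D. tau q \<in> V \<and> phi (tau q) = g (f q))))"

text \<open>Dilation surface: compact connected Hausdorff space X, finite singular set S,
  an atlas A of charts on X - S with dilation transition maps, and every singular point
  has a punctured neighbourhood dilation-equivalent to a punctured neighbourhood of the
  cone point of a translation surface (cone angle 2k pi, developing map z \<mapsto> z^k).\<close>
definition dilation_surface ::
  "'a topology \<Rightarrow> 'a set \<Rightarrow> ('a set \<times> ('a \<Rightarrow> complex)) set \<Rightarrow> bool" where
  "dilation_surface X S A \<longleftrightarrow>
     compact_space X \<and> Hausdorff_space X \<and> connected_space X \<and>
     finite S \<and> S \<subseteq> topspace X \<and>
     (\<forall>(U, phi)\<in>A. openin X U \<and> U \<inter> S = {} \<and> open (phi ` U) \<and>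
        homeomorphic_map (subtopology X U) (subtopology euclidean (phi ` U)) phi) \<and>
     topspace X - S \<subseteq> \<Union> (fst ` A) \<and>
     (\<forall>(U, phi)\<in>A. develops A X U id phi) \<and>
     (\<forall>s\<in>S. \<exists>U h r (k::nat). openin X U \<and> s \<in> U \<and> U \<inter> S = {s} \<and> r > 0 \<and> k \<ge> 1 \<and>
        homeomorphic_map (subtopology X U) (subtopology euclidean (ball 0 r)) h \<and>
        h s = 0 \<and> develops A X (U - {s}) id (\<lambda>x. (h x) ^ k))"

text \<open>An embedded dilation cylinder of angle theta: the quotient of the strip
  {z. 0 \<le> Im z \<le> theta} (log-coordinates of a sector of angle theta, developing map exp)
  by the translation z \<mapsto> z + L (L > 0, i.e. the dilation w \<mapsto> e^L w),
  embedded into X, with interior in X - S and compatible with the dilation structure.\<close>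
definition has_dilation_cylinder ::
  "'a topology \<Rightarrow> 'a set \<Rightarrow> ('a set \<times> ('a \<Rightarrow> complex)) set \<Rightarrow> real \<Rightarrow> bool" where
  "has_dilation_cylinder X S A theta \<longleftrightarrow> theta > 0 \<and>
     (\<exists>(L::real) (F::complex \<Rightarrow> 'a). L > 0 \<and>
        continuous_map (subtopology euclidean {z. 0 \<le> Im z \<and> Im z \<le> theta}) X F \<and>
        (\<forall>z. 0 \<le> Im z \<and> Im z \<le> theta \<longrightarrow> F (z + complex_of_real L) = F z) \<and>
        (\<forall>z w. 0 \<le> Im z \<and> Im z \<le> theta \<and> 0 \<le> Im w \<and> Im w \<le> theta \<and> F z = F w \<longrightarrow>
               (\<exists>n::int. w = z + of_int n * complex_of_real L)) \<and>
        (\<forall>z. 0 < Im z \<and> Im z < theta \<longrightarrow> F z \<notin> S) \<and>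
        develops A euclidean {z. 0 < Im z \<and> Im z < theta} F exp)"

text \<open>Geodesic triangulation: a finite family of non-degenerate Euclidean triangles
  (vertices a b c, map tau) mapped into X, vertices sent to singular points, all other points
  to regular points, locally isometric up to dilation in charts (so edges are saddle
  connections), injective on interiors, interiors disjoint from everything else, covering X.\<close>
definition geodesic_triangulation ::
  "'a topology \<Rightarrow> 'a set \<Rightarrow> ('a set \<times> ('a \<Rightarrow> complex)) set \<Rightarrow> bool" where
  "geodesic_triangulation X S A \<longleftrightarrow>
     (\<exists>T :: (complex \<times> complex \<times> complex \<times> (complex \<Rightarrow> 'a)) set.
        finite T \<and>
        (\<forall>(a, b, c, tau)\<in>T.
           interior (convex hull {a, b, c}) \<noteq> {} \<and>
           continuous_map (subtopology euclidean (convex hull {a, b, c})) X tau \<and>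
           inj_on tau (interior (convex hull {a, b, c})) \<and>
           tau a \<in> S \<and> tau b \<in> S \<and> tau c \<in> S \<and>
           (\<forall>z \<in> convex hull {a, b, c} - {a, b, c}. tau z \<notin> S) \<and>
           develops A euclidean (convex hull {a, b, c} - {a, b, c}) tau id \<and>
           tau ` interior (convex hull {a, b, c}) \<inter> tau ` frontier (convex hull {a, b, c}) = {}) \<and>
        (\<forall>(a, b, c, tau)\<in>T. \<forall>(a', b', c', tau')\<in>T. (a, b, c, tau) \<noteq> (a', b', c', tau') \<longrightarrow>
           tau ` interior (convex hull {a, b, c}) \<inter> tau' ` (convex hull {a', b', c'}) = {}) \<and>
        (\<Union>(a, b, c, tau)\<in>T. tau ` (convex hull {a, b, c})) = topspace X)"

end

theory Submission
  imports Defs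
begin

lemma cont_arg:
  fixes P :: "real \<Rightarrow> bool"
  assumes init: "\<exists>r>0. \<forall>s\<in>{0..1}. s < r \<longrightarrow> P s"
    and clos: "\<forall>s\<in>{0..1}. (\<forall>s'\<in>{0..<s}. P s') \<longrightarrow> s > 0 \<longrightarrow> P s"
    and loc: "\<forall>s\<in>{0..1}. P s \<longrightarrow> (\<exists>r>0. \<exists>\<alpha> \<beta>::complex. \<forall>s'\<in>{0..1}. \<bar>s' - s\<bar> < r \<longrightarrow> (P s' \<longleftrightarrow> \<alpha> + of_real s' * \<beta> = 0))"
  shows "P 1"
proof (rule ccontr)
  assume n1: "\<not> P 1"
  define M where "M = {s\<in>{0..1}. \<not> P s}"
  have "1 \<in> M" using n1 by (simp add: M_def)
  hence Mne: "M \<noteq> {}" by auto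
  have bdd: "bdd_below M" unfolding M_def by (rule bdd_belowI[of _ 0]) auto
  define s1 where "s1 = Inf M"
  have s1le: "s1 \<le> m" if "m \<in> M" for m using bdd that unfolding s1_def by (simp add: cInf_lower)
  obtain r where r: "r > 0" "\<forall>s\<in>{0..1}. s < r \<longrightarrow> P s" using init by blast
  have "r \<le> m" if "m \<in> M" for m using r that unfolding M_def by (metis (mono_tags, lifting) mem_Collect_eq not_le)
  hence s1r: "r \<le> s1" unfolding s1_def using Mne by (simp add: cInf_greatest)
  have s1_1: "s1 \<le> 1" using s1le[OF \<open>1 \<in> M\<close>] .
  have below: "P s'" if "s' \<in> {0..<s1}" for s'
  proof (rule ccontr)
    assume "\<not> P s'"
    hence "s' \<in> M" using that s1_1 unfolding M_def by auto
    thus False using s1le that by force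
  qed
  have s1in: "s1 \<in> {0..1}" using s1r r(1) s1_1 by auto
  have Ps1: "P s1" using clos[rule_format, OF s1in] below s1r r(1) by auto
  obtain r' \<alpha> \<beta> where r': "r' > 0" and h: "\<forall>s'\<in>{0..1}. \<bar>s' - s1\<bar> < r' \<longrightarrow> (P s' \<longleftrightarrow> \<alpha> + of_real s' * \<beta> = (0::complex))"
    using loc[rule_format, OF s1in Ps1] by blast
  define d where "d = min r' s1"
  have d: "d > 0" "d \<le> r'" "d \<le> s1" using r' s1r r(1) unfolding d_def by auto
  define t1 where "t1 = s1 - d/2"
  define t2 where "t2 = s1 - d/4"
  have t1: "t1 \<in> {0..<s1}" "t1 \<in> {0..1}" "\<bar>t1 - s1\<bar> < r'" using d s1_1 unfolding t1_def by auto
  have t2: "t2 \<in> {0..<s1}" "t2 \<in> {0..1}" "\<bar>t2 - s1\<bar> < r'" using d s1_1 unfolding t2_def by auto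
  have e1: "\<alpha> + of_real t1 * \<beta> = 0" using h t1 below by blast
  have e2: "\<alpha> + of_real t2 * \<beta> = 0" using h t2 below by blast
  have "of_real (t1 - t2) * \<beta> = (\<alpha> + of_real t1 * \<beta>) - (\<alpha> + of_real t2 * \<beta>)" by (simp add: algebra_simps)
  hence "of_real (t1 - t2) * \<beta> = 0" using e1 e2 by simp
  moreover have "t1 \<noteq> t2" using d unfolding t1_def t2_def by auto
  ultimately have b0: "\<beta> = 0" by simp
  hence a0: "\<alpha> = 0" using e1 by simp
  have "s1 + r' \<le> m" if "m \<in> M" for m
  proof -
    have "m \<in> {0..1}" "\<not> P m" using that unfolding M_def by auto
    hence "\<not> \<bar>m - s1\<bar> < r'" using h a0 b0 by auto
    moreover have "s1 \<le> m" using s1le that .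
    ultimately show ?thesis by linarith
  qed
  hence "s1 + r' \<le> Inf M" using Mne by (intro cInf_greatest) auto
  hence "s1 + r' \<le> s1" unfolding s1_def .
  thus False using r' by linarith
qed

theorem mainTheorem3:
  fixes X :: "'a topology" and S :: "'a set" and A :: "('a set \<times> ('a \<Rightarrow> complex)) set"
    and theta :: real
  assumes "dilation_surface X S A"
    and "has_dilation_cylinder X S A theta"
    and "theta \<ge> pi"
  shows "\<not> geodesic_triangulation X S A"
proof
  assume GT: "geodesic_triangulation X S A"
  define St where "St = {z::complex. 0 < Im z \<and> Im z < theta}"
  define CSt where "CSt = {z::complex. 0 \<le> Im z \<and> Im z \<le> theta}"
  have haus: "Hausdorff_space X"
    using assms(1) unfolding dilation_surface_def by (elim conjE) assumption
  have charts: "\<forall>(U, phi)\<in>A. openin X U \<and> U \<inter> S = {} \<and> open (phi ` U) \<and>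
        homeomorphic_map (subtopology X U) (subtopology euclidean (phi ` U)) phi"
    using assms(1) unfolding dilation_surface_def by (elim conjE) assumption
  have cover: "topspace X - S \<subseteq> \<Union> (fst ` A)"
    using assms(1) unfolding dilation_surface_def by (elim conjE) assumption
  obtain L F where H: "L > 0 \<and>
        continuous_map (subtopology euclidean {z. 0 \<le> Im z \<and> Im z \<le> theta}) X F \<and>
        (\<forall>z. 0 \<le> Im z \<and> Im z \<le> theta \<longrightarrow> F (z + complex_of_real L) = F z) \<and>
        (\<forall>z w. 0 \<le> Im z \<and> Im z \<le> theta \<and> 0 \<le> Im w \<and> Im w \<le> theta \<and> F z = F w \<longrightarrow>
               (\<exists>n::int. w = z + of_int n * complex_of_real L)) \<and>
        (\<forall>z. 0 < Im z \<and> Im z < theta \<longrightarrow> F z \<notin> S) \<and>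
        develops A euclidean {z. 0 < Im z \<and> Im z < theta} F exp"
    using assms(2) unfolding has_dilation_cylinder_def by (elim conjE exE) (rule that, intro conjI, assumption+)
  have Fcont: "continuous_map (subtopology euclidean CSt) X F"
    using H unfolding CSt_def by (elim conjE) assumption
  have FS: "\<forall>z. 0 < Im z \<and> Im z < theta \<longrightarrow> F z \<notin> S"
    using H by (elim conjE) assumption
  have Fdev: "develops A euclidean St F exp"
    using H unfolding St_def by (elim conjE) assumption
  obtain T where TT: "finite T \<and> (\<forall>(a, b, c, tau)\<in>T.
           interior (convex hull {a, b, c}) \<noteq> {} \<and>
           continuous_map (subtopology euclidean (convex hull {a, b, c})) X tau \<and>
           inj_on tau (interior (convex hull {a, b, c})) \<and>
           tau a \<in> S \<and> tau b \<in> S \<and> tau c \<in> S \<and>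
           (\<forall>z \<in> convex hull {a, b, c} - {a, b, c}. tau z \<notin> S) \<and>
           develops A euclidean (convex hull {a, b, c} - {a, b, c}) tau id \<and>
           tau ` interior (convex hull {a, b, c}) \<inter> tau ` frontier (convex hull {a, b, c}) = {}) \<and>
        (\<forall>(a, b, c, tau)\<in>T. \<forall>(a', b', c', tau')\<in>T. (a, b, c, tau) \<noteq> (a', b', c', tau') \<longrightarrow>
           tau ` interior (convex hull {a, b, c}) \<inter> tau' ` (convex hull {a', b', c'}) = {}) \<and>
        (\<Union>(a, b, c, tau)\<in>T. tau ` (convex hull {a, b, c})) = topspace X"
    using GT unfolding geodesic_triangulation_def by (elim exE) (rule that)
  have Tprop: "\<forall>(a, b, c, tau)\<in>T.
           interior (convex hull {a, b, c}) \<noteq> {} \<and>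
           continuous_map (subtopology euclidean (convex hull {a, b, c})) X tau \<and>
           inj_on tau (interior (convex hull {a, b, c})) \<and>
           tau a \<in> S \<and> tau b \<in> S \<and> tau c \<in> S \<and>
           (\<forall>z \<in> convex hull {a, b, c} - {a, b, c}. tau z \<notin> S) \<and>
           develops A euclidean (convex hull {a, b, c} - {a, b, c}) tau id \<and>
           tau ` interior (convex hull {a, b, c}) \<inter> tau ` frontier (convex hull {a, b, c}) = {}"
    using TT by (elim conjE) assumption
  have Tcov: "(\<Union>(a, b, c, tau)\<in>T. tau ` (convex hull {a, b, c})) = topspace X"
    using TT by (elim conjE) assumption
  have chart_ex: "\<exists>V phi. (V, phi) \<in> A \<and> p \<in> V" if "p \<in> topspace X" "p \<notin> S" for p
  proof -
    have "p \<in> \<Union>(fst ` A)" using cover that by blast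
    then obtain x where "x \<in> A" "p \<in> fst x" by auto
    then show ?thesis by (intro exI[of _ "fst x"] exI[of _ "snd x"]) auto
  qed
  have chart_inj: "x = y" if "(V, phi) \<in> A" "x \<in> V" "y \<in> V" "phi x = phi y" for V phi x y
  proof -
    have "openin X V \<and> V \<inter> S = {} \<and> open (phi ` V) \<and> homeomorphic_map (subtopology X V) (subtopology euclidean (phi ` V)) phi"
      using bspec[OF charts that(1)] by simp
    hence "inj_on phi (topspace X \<inter> V)" "V \<subseteq> topspace X"
      by (auto simp: homeomorphic_map_def openin_subset)
    thus ?thesis using that by (auto simp: inj_on_def)
  qed
  have FD: "\<exists>N a1 b1. open N \<and> p \<in> N \<and> a1 > 0 \<and> (\<forall>q\<in>N\<inter>St. F q \<in> V \<and> phi (F q) = of_real a1 * exp q + b1)"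
    if "p \<in> St" "(V, phi) \<in> A" "F p \<in> V" for p V phi
  proof -
    have "\<exists>N g. openin euclidean N \<and> p \<in> N \<and> dilation_map g \<and> (\<forall>q\<in>N\<inter>St. F q \<in> V \<and> phi (F q) = g (exp q))"
      using Fdev[unfolded develops_def, rule_format, OF that(1) conjI[OF that(2,3)]] by simp
    then obtain N g where N: "openin euclidean N" "p \<in> N" "dilation_map g" "\<forall>q\<in>N\<inter>St. F q \<in> V \<and> phi (F q) = g (exp q)"
      by blast
    obtain a1 b1 where g: "a1 > 0" "\<forall>z. g z = of_real a1 * z + b1" using N(3) unfolding dilation_map_def by blast
    show ?thesis
      by (rule exI[of _ N], rule exI[of _ a1], rule exI[of _ b1]) (use N(2,4) N(1)[folded open_openin] g in auto)
  qed
  define hc where "hc = theta / 2"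
  define z0 where "z0 = \<i> * of_real hc"
  have thpos: "theta > 0" using assms(3) pi_gt_zero by linarith
  have z0St: "z0 \<in> St" and z0C: "z0 \<in> CSt" using thpos unfolding z0_def St_def CSt_def hc_def by auto
  have Ftop: "F z \<in> topspace X" if "z \<in> CSt" for z
    using Fcont that unfolding continuous_map_def by auto
  have FnS: "F z \<notin> S" if "z \<in> St" for z using FS that unfolding St_def by auto
  have "F z0 \<in> (\<Union>(a, b, c, tau)\<in>T. tau ` (convex hull {a, b, c}))" using Tcov Ftop[OF z0C] by simp
  then obtain a b c tau where abct: "(a, b, c, tau) \<in> T" and "F z0 \<in> tau ` (convex hull {a, b, c})" by auto
  then obtain w0 where w0D: "w0 \<in> convex hull {a, b, c}" and w0F: "tau w0 = F z0" by auto
  define Dl where "Dl = convex hull {a, b, c}"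
  define Dl' where "Dl' = Dl - {a, b, c}"
  have tri: "interior Dl \<noteq> {} \<and>
           continuous_map (subtopology euclidean Dl) X tau \<and>
           inj_on tau (interior Dl) \<and>
           tau a \<in> S \<and> tau b \<in> S \<and> tau c \<in> S \<and>
           (\<forall>z \<in> Dl'. tau z \<notin> S) \<and>
           develops A euclidean Dl' tau id \<and>
           tau ` interior Dl \<inter> tau ` frontier Dl = {}"
    using bspec[OF Tprop abct] unfolding Dl_def Dl'_def by simp
  have tcont: "continuous_map (subtopology euclidean Dl) X tau"
    and tS: "tau a \<in> S" "tau b \<in> S" "tau c \<in> S"
    and tdev: "develops A euclidean Dl' tau id"
    using tri by auto
  have TD: "\<exists>N a2 b2. open N \<and> p \<in> N \<and> a2 > 0 \<and> (\<forall>q\<in>N\<inter>Dl'. tau q \<in> V \<and> phi (tau q) = of_real a2 * q + b2)"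
    if "p \<in> Dl'" "(V, phi) \<in> A" "tau p \<in> V" for p V phi
  proof -
    have "\<exists>N g. openin euclidean N \<and> p \<in> N \<and> dilation_map g \<and> (\<forall>q\<in>N\<inter>Dl'. tau q \<in> V \<and> phi (tau q) = g (id q))"
      using tdev[unfolded develops_def, rule_format, OF that(1) conjI[OF that(2,3)]] by simp
    then obtain N g where N: "openin euclidean N" "p \<in> N" "dilation_map g" "\<forall>q\<in>N\<inter>Dl'. tau q \<in> V \<and> phi (tau q) = g (id q)"
      by blast
    obtain a2 b2 where g: "a2 > 0" "\<forall>z. g z = of_real a2 * z + b2" using N(3) unfolding dilation_map_def by blast
    show ?thesis
      by (rule exI[of _ N], rule exI[of _ a2], rule exI[of _ b2]) (use N(2,4) N(1)[folded open_openin] g in auto)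
  qed
  have inDl': "x \<in> Dl'" if "x \<in> Dl" "tau x \<notin> S" for x
    using that tS unfolding Dl'_def by auto
  have w0D': "w0 \<in> Dl'" using inDl' w0D w0F FnS[OF z0St] unfolding Dl_def by auto
  obtain V0 phi0 where V0: "(V0, phi0) \<in> A" "F z0 \<in> V0" using chart_ex Ftop[OF z0C] FnS[OF z0St] by blast
  obtain N1 a1 b1 where N1: "open N1" "z0 \<in> N1" "a1 > 0" "\<forall>q\<in>N1\<inter>St. F q \<in> V0 \<and> phi0 (F q) = of_real a1 * exp q + b1"
    using FD[OF z0St V0] by blast
  obtain N2 a2 b2 where N2: "open N2" "w0 \<in> N2" "a2 > 0" "\<forall>q\<in>N2\<inter>Dl'. tau q \<in> V0 \<and> phi0 (tau q) = of_real a2 * q + b2"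
    using TD[OF w0D' V0(1)] w0F V0(2) by auto
  have eq0: "of_real a2 * w0 + b2 = of_real a1 * exp z0 + b1"
    using N1(2,4) N2(2,4) z0St w0D' w0F by force
  define aG where "aG = a1 / a2"
  have aG: "aG > 0" using N1(3) N2(3) unfolding aG_def by simp
  have w0G: "w0 = of_real aG * exp z0 + (b1 - b2) / of_real a2"
  proof -
    have a2nz: "complex_of_real a2 \<noteq> 0" using N2(3) by simp
    have e1: "of_real a2 * w0 = of_real a1 * exp z0 + b1 - b2" using eq0 by (simp add: algebra_simps)
    have e2: "of_real a2 * (of_real aG * exp z0 + (b1 - b2) / of_real a2) = of_real a1 * exp z0 + b1 - b2"
      unfolding aG_def using a2nz by (simp add: field_simps)
    show ?thesis using e1 e2 a2nz by (metis mult_left_cancel)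
  qed
  define \<rho> where "\<rho> = exp (- (\<i> * of_real hc))"
  have \<rho>z0: "exp z0 * \<rho> = 1" unfolding \<rho>_def z0_def by (simp add: exp_minus field_simps)
  obtain v where v: "v \<in> {a, b, c}" "Re (\<rho> * (v - w0)) \<ge> 0"
  proof -
    obtain l1 l2 l3 where l: "0 \<le> l1" "0 \<le> l2" "0 \<le> l3" "l1 + l2 + l3 = 1"
      "w0 = l1 *\<^sub>R a + l2 *\<^sub>R b + l3 *\<^sub>R c"
      using w0D unfolding convex_hull_3 by blast
    have "of_real l1 * (\<rho> * (a - w0)) + of_real l2 * (\<rho> * (b - w0)) + of_real l3 * (\<rho> * (c - w0))
        = \<rho> * ((l1 *\<^sub>R a + l2 *\<^sub>R b + l3 *\<^sub>R c) - of_real (l1 + l2 + l3) * w0)"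
      by (simp add: scaleR_conv_of_real algebra_simps)
    also have "\<dots> = 0" using l(4,5) by simp
    finally have "Re (of_real l1 * (\<rho> * (a - w0)) + of_real l2 * (\<rho> * (b - w0)) + of_real l3 * (\<rho> * (c - w0))) = 0"
      by simp
    hence sum0: "l1 * Re (\<rho> * (a - w0)) + l2 * Re (\<rho> * (b - w0)) + l3 * Re (\<rho> * (c - w0)) = 0" by simp
    show ?thesis
    proof (rule ccontr)
      assume "\<not> ?thesis"
      hence neg: "Re (\<rho> * (a - w0)) < 0" "Re (\<rho> * (b - w0)) < 0" "Re (\<rho> * (c - w0)) < 0"
        using that[of a] that[of b] that[of c] \<open>\<not> thesis\<close> by (meson insertCI not_le)+
      have "l1 * Re (\<rho> * (a - w0)) \<le> 0" "l2 * Re (\<rho> * (b - w0)) \<le> 0" "l3 * Re (\<rho> * (c - w0)) \<le> 0"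
        using neg l by (simp_all add: mult_nonneg_nonpos)
      moreover have "l1 > 0 \<or> l2 > 0 \<or> l3 > 0" using l by linarith
      hence "l1 * Re (\<rho> * (a - w0)) < 0 \<or> l2 * Re (\<rho> * (b - w0)) < 0 \<or> l3 * Re (\<rho> * (c - w0)) < 0"
        using neg by (auto simp: mult_pos_neg)
      ultimately show False using sum0 by linarith
    qed
  qed
  define D where "D = (v - w0) / of_real aG"
  define q where "q = (\<lambda>s::real. 1 + of_real s * (\<rho> * D))"
  define zp where "zp = (\<lambda>s::real. z0 + Ln (q s))"
  define u where "u = (\<lambda>s::real. exp z0 + of_real s * D)"
  define w where "w = (\<lambda>s::real. w0 + of_real s * (v - w0))"
  have aGD: "of_real aG * D = v - w0" using aG unfolding D_def by simp
  have ReD: "Re (\<rho> * D) \<ge> 0"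
  proof -
    have "\<rho> * D = (\<rho> * (v - w0)) / of_real aG" unfolding D_def by simp
    hence "Re (\<rho> * D) = Re (\<rho> * (v - w0)) / aG" by simp
    thus ?thesis using v(2) aG by simp
  qed
  have Req: "Re (q s) > 0" if "s \<ge> 0" for s
  proof -
    have "Re (q s) = 1 + s * Re (\<rho> * D)" unfolding q_def by simp
    moreover have "s * Re (\<rho> * D) \<ge> 0" using ReD that by simp
    ultimately show ?thesis by linarith
  qed
  have qnz: "q s \<noteq> 0" if "s \<ge> 0" for s using Req[OF that] by auto
  have expzp: "exp (zp s) = u s" if "s \<ge> 0" for s
  proof -
    have "exp (zp s) = exp z0 * q s" unfolding zp_def using qnz[OF that] by (simp add: exp_add)
    also have "\<dots> = exp z0 + of_real s * (exp z0 * \<rho>) * D" unfolding q_def by (simp add: algebra_simps)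
    also have "\<dots> = u s" unfolding u_def using \<rho>z0 by simp
    finally show ?thesis .
  qed
  have zpSt: "zp s \<in> St" if "s \<ge> 0" for s
  proof -
    have "\<bar>Im (Ln (q s))\<bar> < pi/2" using Re_Ln_pos_lt_imp[OF Req[OF that]] .
    moreover have "Im (zp s) = hc + Im (Ln (q s))" unfolding zp_def z0_def by simp
    ultimately show ?thesis unfolding St_def hc_def using assms(3) by auto
  qed
  have zpC: "zp s \<in> CSt" if "s \<ge> 0" for s using zpSt[OF that] unfolding St_def CSt_def by auto
  have zp0: "zp 0 = z0" unfolding zp_def q_def by simp
  have w0': "w 0 = w0" unfolding w_def by simp
  have w1: "w 1 = v" unfolding w_def by simp
  have wDl: "w s \<in> Dl" if "0 \<le> s" "s \<le> 1" for s
  proof -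
    have vD: "v \<in> Dl" unfolding Dl_def by (rule hull_inc[OF v(1)])
    have ws: "w s = (1 - s) *\<^sub>R w0 + s *\<^sub>R v"
      unfolding w_def scaleR_conv_of_real of_real_diff of_real_1 by (simp add: algebra_simps)
    have cD: "convex Dl" unfolding Dl_def by (rule convex_convex_hull)
    have w0Dl: "w0 \<in> Dl" using w0D unfolding Dl_def .
    have "(1 - s) *\<^sub>R w0 + s *\<^sub>R v \<in> Dl"
      by (rule convexD[OF cD w0Dl vD]) (use that in auto)
    thus ?thesis unfolding ws .
  qed
  have zcont: "continuous_on {0..1} zp"
  proof -
    have "q s \<notin> \<real>\<^sub>\<le>\<^sub>0" if "s \<in> {0..1}" for s using Req[of s] that by (auto simp: complex_nonpos_Reals_iff)
    thus ?thesis unfolding zp_def q_def by (intro continuous_intros) auto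
  qed
  have wcont: "continuous_on {0..1} w" unfolding w_def by (intro continuous_intros)
  have Fzmap: "continuous_map (top_of_set {0..1}) X (F \<circ> zp)"
  proof (rule continuous_map_compose[OF _ Fcont])
    show "continuous_map (top_of_set {0..1}) (top_of_set CSt) zp"
      unfolding continuous_map_in_subtopology using zcont zpC by auto
  qed
  have twmap: "continuous_map (top_of_set {0..1}) X (tau \<circ> w)"
  proof (rule continuous_map_compose[OF _ tcont])
    show "continuous_map (top_of_set {0..1}) (top_of_set Dl) w"
      unfolding continuous_map_in_subtopology using wcont wDl by auto
  qed
  have LOC: "\<exists>r>0. \<forall>s'\<in>{0..1}. \<bar>s' - s\<bar> < r \<longrightarrow>
      (F (zp s') = tau (w s') \<longleftrightarrow> of_real a1 * u s' + b1 = of_real a2 * w s' + b2)"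
    if s: "s \<in> {0..1}" and Ps: "F (zp s) = tau (w s)" and V: "(V, phi) \<in> A"
      and N1: "open N1" "zp s \<in> N1" "\<forall>q\<in>N1\<inter>St. F q \<in> V \<and> phi (F q) = of_real a1 * exp q + b1"
      and N2: "open N2" "w s \<in> N2" "\<forall>q\<in>N2\<inter>Dl'. tau q \<in> V \<and> phi (tau q) = of_real a2 * q + b2"
    for s V phi N1 a1 b1 N2 a2 b2
  proof -
    have s01: "0 \<le> s" "s \<le> 1" using s by auto
    have "tau (w s) \<notin> S" using Ps FnS[OF zpSt[OF s01(1)]] by simp
    hence wsD: "w s \<in> Dl'" using inDl'[OF wDl[OF s01]] by simp
    obtain e1 where e1: "e1 > 0" "ball (zp s) e1 \<subseteq> N1" using N1(1,2) open_contains_ball by blast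
    obtain d1 where d1: "d1 > 0" "\<forall>s'\<in>{0..1}. dist s' s < d1 \<longrightarrow> dist (zp s') (zp s) < e1"
      using zcont s e1(1) unfolding continuous_on_iff by blast
    obtain e2 where e2: "e2 > 0" "ball (w s) e2 \<subseteq> N2" using N2(1,2) open_contains_ball by blast
    obtain dl where dl: "dl > 0" "\<forall>x\<in>{a,b,c}. x \<noteq> w s \<longrightarrow> dl \<le> dist (w s) x"
      using finite_set_avoid[of "{a,b,c}" "w s"] by auto
    have me: "min e2 dl > 0" using e2 dl by simp
    obtain d2 where d2: "d2 > 0" "\<forall>s'\<in>{0..1}. dist s' s < d2 \<longrightarrow> dist (w s') (w s) < min e2 dl"
      using wcont s me unfolding continuous_on_iff by blast
    show ?thesis
    proof (rule exI[of _ "min d1 d2"], intro conjI ballI impI)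
      show "min d1 d2 > 0" using d1 d2 by simp
      fix s' assume s': "s' \<in> {0..1}" "\<bar>s' - s\<bar> < min d1 d2"
      have "dist (zp s') (zp s) < e1" using d1 s' by (simp add: dist_real_def)
      hence zin: "zp s' \<in> N1 \<inter> St" using e1 zpSt s' by (auto simp: dist_commute)
      have dw: "dist (w s') (w s) < min e2 dl" using d2 s' by (simp add: dist_real_def)
      have win: "w s' \<in> N2 \<inter> Dl'"
      proof -
        have "w s' \<in> N2" using e2 dw by (auto simp: dist_commute)
        moreover have "w s' \<notin> {a,b,c}"
        proof
          assume wv: "w s' \<in> {a,b,c}"
          moreover have "w s' \<noteq> w s" using wv wsD unfolding Dl'_def by auto
          ultimately have "dl \<le> dist (w s) (w s')" using dl(2) by auto
          thus False using dw by (simp add: dist_commute)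
        qed
        moreover have "w s' \<in> Dl" using wDl s' by auto
        ultimately show ?thesis unfolding Dl'_def by auto
      qed
      have f1: "F (zp s') \<in> V" "phi (F (zp s')) = of_real a1 * u s' + b1"
        using N1(3) zin expzp s' by auto
      have f2: "tau (w s') \<in> V" "phi (tau (w s')) = of_real a2 * w s' + b2" using N2(3) win by auto
      show "F (zp s') = tau (w s') \<longleftrightarrow> of_real a1 * u s' + b1 = of_real a2 * w s' + b2"
        using f1 f2 chart_inj[OF V] by metis
    qed
  qed
  define P where "P = (\<lambda>s. F (zp s) = tau (w s))"
  have "P 1"
  proof (rule cont_arg)
    show "\<exists>r>0. \<forall>s\<in>{0..1}. s < r \<longrightarrow> P s"
    proof -
      have P0: "F (zp 0) = tau (w 0)" using zp0 w0' w0F by simp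
      obtain r where r: "r>0" "\<forall>s'\<in>{0..1}. \<bar>s' - 0\<bar> < r \<longrightarrow>
          (F (zp s') = tau (w s') \<longleftrightarrow> of_real a1 * u s' + b1 = of_real a2 * w s' + b2)"
        using LOC[of 0 V0 phi0 N1 a1 b1 N2 a2 b2] P0 V0(1) N1 N2 zp0 w0' by auto
      have a1eq: "complex_of_real a1 = of_real a2 * of_real aG" using N2(3) unfolding aG_def by simp
      have "of_real a1 * u s' + b1 = of_real a2 * w s' + b2" for s'
      proof -
        have "of_real a1 * u s' + b1 = (of_real a1 * exp z0 + b1) + of_real s' * (of_real a2 * (of_real aG * D))"
          unfolding u_def a1eq by (simp add: algebra_simps)
        also have "\<dots> = (of_real a2 * w0 + b2) + of_real s' * (of_real a2 * (v - w0))" using eq0 aGD by simp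
        also have "\<dots> = of_real a2 * w s' + b2" unfolding w_def by (simp add: algebra_simps)
        finally show ?thesis .
      qed
      thus ?thesis using r unfolding P_def by auto
    qed
    show "\<forall>s\<in>{0..1}. (\<forall>s'\<in>{0..<s}. P s') \<longrightarrow> s > 0 \<longrightarrow> P s"
    proof (intro ballI impI)
      fix s assume s: "s \<in> {0..1}" and below: "\<forall>s'\<in>{0..<s}. P s'" and spos: "s > 0"
      show "P s"
      proof (rule ccontr)
        assume "\<not> P s"
        hence ne: "F (zp s) \<noteq> tau (w s)" unfolding P_def .
        have t1: "F (zp s) \<in> topspace X" using Ftop zpC s by auto
        have t2: "tau (w s) \<in> topspace X" using tcont wDl s unfolding continuous_map_def by auto
        obtain U1 U2 where U: "openin X U1" "openin X U2" "F (zp s) \<in> U1" "tau (w s) \<in> U2" "disjnt U1 U2"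
          using haus t1 t2 ne unfolding Hausdorff_space_def by blast
        have o1: "openin (top_of_set {0..1}) {x \<in> topspace (top_of_set {0..1}). (F \<circ> zp) x \<in> U1}"
          using Fzmap U(1) unfolding continuous_map_def by blast
        have o2: "openin (top_of_set {0..1}) {x \<in> topspace (top_of_set {0..1}). (tau \<circ> w) x \<in> U2}"
          using twmap U(2) unfolding continuous_map_def by blast
        obtain e1 where e1: "e1 > 0" "\<forall>x'\<in>{0..1}. dist x' s < e1 \<longrightarrow> F (zp x') \<in> U1"
          using o1 s U(3) unfolding openin_euclidean_subtopology_iff by auto
        obtain e2 where e2: "e2 > 0" "\<forall>x'\<in>{0..1}. dist x' s < e2 \<longrightarrow> tau (w x') \<in> U2"
          using o2 s U(4) unfolding openin_euclidean_subtopology_iff by auto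
        define t where "t = s - min (min e1 e2) s / 2"
        have t: "t \<in> {0..<s}" "t \<in> {0..1}" "dist t s < e1" "dist t s < e2"
          using e1(1) e2(1) spos s unfolding t_def dist_real_def by auto
        have "F (zp t) = tau (w t)" using below t unfolding P_def by auto
        moreover have "F (zp t) \<in> U1" "tau (w t) \<in> U2" using e1 e2 t by auto
        ultimately show False using U(5) by (auto simp: disjnt_def)
      qed
    qed
    show "\<forall>s\<in>{0..1}. P s \<longrightarrow> (\<exists>r>0. \<exists>\<alpha> \<beta>::complex. \<forall>s'\<in>{0..1}. \<bar>s' - s\<bar> < r \<longrightarrow> (P s' \<longleftrightarrow> \<alpha> + of_real s' * \<beta> = 0))"
    proof (intro ballI impI)
      fix s assume s: "s \<in> {0..1}" and Ps: "P s"
      have pt: "F (zp s) \<in> topspace X" "F (zp s) \<notin> S" using Ftop zpC FnS zpSt s by auto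
      obtain V phi where V: "(V, phi) \<in> A" "F (zp s) \<in> V" using chart_ex[OF pt] by blast
      have zs: "zp s \<in> St" using zpSt s by auto
      obtain N1' a1' b1' where N1': "open N1'" "zp s \<in> N1'" "a1' > 0"
          "\<forall>q\<in>N1'\<inter>St. F q \<in> V \<and> phi (F q) = of_real a1' * exp q + b1'"
        using FD[OF zs V] by blast
      have s01: "0 \<le> s" "s \<le> 1" using s by auto
      have "tau (w s) \<notin> S" using Ps FnS[OF zpSt[OF s01(1)]] unfolding P_def by simp
      hence wsD: "w s \<in> Dl'" using inDl'[OF wDl[OF s01]] by simp
      obtain N2' a2' b2' where N2': "open N2'" "w s \<in> N2'" "a2' > 0"
          "\<forall>q\<in>N2'\<inter>Dl'. tau q \<in> V \<and> phi (tau q) = of_real a2' * q + b2'"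
        using TD[OF wsD V(1)] V(2) Ps unfolding P_def by auto
      obtain r where r: "r > 0" "\<forall>s'\<in>{0..1}. \<bar>s' - s\<bar> < r \<longrightarrow>
          (F (zp s') = tau (w s') \<longleftrightarrow> of_real a1' * u s' + b1' = of_real a2' * w s' + b2')"
        using LOC[OF s Ps[unfolded P_def] V(1) N1'(1,2,4) N2'(1,2,4)] by blast
      define \<alpha> where "\<alpha> = of_real a1' * exp z0 + b1' - of_real a2' * w0 - b2'"
      define \<beta> where "\<beta> = of_real a1' * D - of_real a2' * (v - w0)"
      have eqv: "(of_real a1' * u s' + b1' = of_real a2' * w s' + b2') \<longleftrightarrow> \<alpha> + of_real s' * \<beta> = 0" for s'
      proof -
        have "\<alpha> + of_real s' * \<beta> = (of_real a1' * u s' + b1') - (of_real a2' * w s' + b2')"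
          unfolding \<alpha>_def \<beta>_def u_def w_def by (simp add: algebra_simps)
        thus ?thesis by simp
      qed
      show "\<exists>r>0. \<exists>\<alpha> \<beta>::complex. \<forall>s'\<in>{0..1}. \<bar>s' - s\<bar> < r \<longrightarrow> (P s' \<longleftrightarrow> \<alpha> + of_real s' * \<beta> = 0)"
        using r eqv unfolding P_def by blast
    qed
  qed
  hence "F (zp 1) = tau v" unfolding P_def w1 .
  moreover have "F (zp 1) \<notin> S" using FnS zpSt by simp
  ultimately show False using v(1) tS by auto
qed
end
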